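(* Let $\mathcal{B}\subseteq\mathcal{C}$ be $*$-invariant subspaces of $\mathcal{A}$ with $1\in\mathcal{B}$, let $m\ge1$ with $\mathcal{B}^{[m]}\subseteq\mathcal{C}$, and let $L$ be a hermitian linear functional on $\mathcal{C}^2$ with $\mathcal{C}=\mathcal{B}+K_L(\mathcal{C})$. Put $\mathcal{K}:=K_L(\mathcal{C})\cap\mathcal{B}^{[1]}$. Then $\mathcal{K}^{[2m-1]}\cap\mathcal{C}\subseteq K_L(\mathcal{C})$.
   Context: $\mathcal{A}$ is a complex unital $*$-algebra with fixed generators $\{a_i:i\in I\}$, the set being closed under $*$. For a subspace $V$, $V^+:=V+\mathrm{Lin}\{a_iv:i\in I,v\in V\}$, $V^{[0]}=V$, $V^{[l+1]}=(V^{[l]})^+$. $\mathcal{C}^2:=\mathrm{Lin}\{ab:a,b\in\mathcal{C}\}$; $L$ hermitian means $L(b^* )=\overline{L(b)}$; $K_L(\mathcal{C}):=\{a\in\mathcal{C}: L(b^*a)=0\ \forall b\in\mathcal{C}\}$. *)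

theory Defs
  imports Complex_Main
begin

definition star_algebra :: "(complex \<Rightarrow> 'a::ring_1 \<Rightarrow> 'a) \<Rightarrow> ('a \<Rightarrow> 'a) \<Rightarrow> bool" where
  "star_algebra smul invol \<longleftrightarrow>
     vector_space smul
   \<and> (\<forall>c x y. smul c (x * y) = smul c x * y \<and> smul c (x * y) = x * smul c y)
   \<and> (\<forall>x. invol (invol x) = x)
   \<and> (\<forall>x y. invol (x + y) = invol x + invol y)
   \<and> (\<forall>c x. invol (smul c x) = smul (cnj c) (invol x))
   \<and> (\<forall>x y. invol (x * y) = invol y * invol x)"

definition generators :: "(complex \<Rightarrow> 'a::ring_1 \<Rightarrow> 'a) \<Rightarrow> ('a \<Rightarrow> 'a) \<Rightarrow> 'a set \<Rightarrow> bool" where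
  "generators smul invol G \<longleftrightarrow>
     invol ` G \<subseteq> G
   \<and> module.span smul {prod_list xs | xs. set xs \<subseteq> G} = UNIV"

definition set_plus :: "'a::plus set \<Rightarrow> 'a set \<Rightarrow> 'a set" where
  "set_plus V W = {v + w | v w. v \<in> V \<and> w \<in> W}"

definition step_space :: "(complex \<Rightarrow> 'a::ring_1 \<Rightarrow> 'a) \<Rightarrow> 'a set \<Rightarrow> 'a set \<Rightarrow> 'a set" where
  "step_space smul G V = set_plus V (module.span smul {a * v | a v. a \<in> G \<and> v \<in> V})"

definition iter_space :: "(complex \<Rightarrow> 'a::ring_1 \<Rightarrow> 'a) \<Rightarrow> 'a set \<Rightarrow> nat \<Rightarrow> 'a set \<Rightarrow> 'a set" where
  "iter_space smul G l V = (step_space smul G ^^ l) V"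

definition sq_space :: "(complex \<Rightarrow> 'a::ring_1 \<Rightarrow> 'a) \<Rightarrow> 'a set \<Rightarrow> 'a set" where
  "sq_space smul C = module.span smul {a * b | a b. a \<in> C \<and> b \<in> C}"

definition star_invariant :: "('a \<Rightarrow> 'a) \<Rightarrow> 'a set \<Rightarrow> bool" where
  "star_invariant invol V \<longleftrightarrow> invol ` V \<subseteq> V"

definition linear_on :: "(complex \<Rightarrow> 'a::ring_1 \<Rightarrow> 'a) \<Rightarrow> 'a set \<Rightarrow> ('a \<Rightarrow> complex) \<Rightarrow> bool" where
  "linear_on smul W L \<longleftrightarrow>
     (\<forall>x\<in>W. \<forall>y\<in>W. L (x + y) = L x + L y) \<and> (\<forall>c. \<forall>x\<in>W. L (smul c x) = c * L x)"

definition hermitian_on :: "('a \<Rightarrow> 'a) \<Rightarrow> 'a set \<Rightarrow> ('a \<Rightarrow> complex) \<Rightarrow> bool" where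
  "hermitian_on invol W L \<longleftrightarrow> (\<forall>b\<in>W. L (invol b) = cnj (L b))"

definition kernel_L :: "('a::ring_1 \<Rightarrow> 'a) \<Rightarrow> ('a \<Rightarrow> complex) \<Rightarrow> 'a set \<Rightarrow> 'a set" where
  "kernel_L invol L C = {a \<in> C. \<forall>b\<in>C. L (invol b * a) = 0}"

end

theory Submission
  imports Defs
begin

locale ctx =
  fixes smul :: "complex \<Rightarrow> 'a::ring_1 \<Rightarrow> 'a" and invol :: "'a \<Rightarrow> 'a"
    and G B C :: "'a set" and L :: "'a \<Rightarrow> complex" and m :: nat
  assumes alg: "star_algebra smul invol"
    and gen: "generators smul invol G"
    and subB: "module.subspace smul B" and subC: "module.subspace smul C"
    and BC: "B \<subseteq> C" and invC: "star_invariant invol C"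
    and m: "m \<ge> 1"
    and Bm: "iter_space smul G m B \<subseteq> C"
    and lin: "linear_on smul (sq_space smul C) L"
    and herm: "hermitian_on invol (sq_space smul C) L"
    and decomp: "C = set_plus B (kernel_L invol L C)"
begin

interpretation M: module smul
  using alg unfolding star_algebra_def by (simp add: module_iff_vector_space)

abbreviation I where "I p V \<equiv> iter_space smul G p V"
abbreviation S where "S \<equiv> sq_space smul C"

definition good where "good c y \<longleftrightarrow> invol c * y \<in> S \<and> L (invol c * y) = 0"

lemma invol_invol: "invol (invol x) = x" using alg by (simp add: star_algebra_def)
lemma invol_mult: "invol (x * y) = invol y * invol x" using alg by (simp add: star_algebra_def)
lemma smul_right: "smul r (x * y) = x * smul r y" using alg unfolding star_algebra_def by metis
lemma invG: "a \<in> G \<Longrightarrow> invol a \<in> G" using gen by (auto simp: generators_def)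
lemma L_add: "x \<in> S \<Longrightarrow> y \<in> S \<Longrightarrow> L (x + y) = L x + L y" using lin by (simp add: linear_on_def)
lemma L_smul: "x \<in> S \<Longrightarrow> L (smul r x) = r * L x" using lin by (simp add: linear_on_def)
lemma S_sub: "M.subspace S" unfolding sq_space_def by simp
lemma S_prod: "x \<in> C \<Longrightarrow> y \<in> C \<Longrightarrow> x * y \<in> S" unfolding sq_space_def
  by (rule M.span_base) blast
lemma L_zero: "L 0 = 0"
proof -
  have "(0::'a) \<in> S" using S_sub M.subspace_def by blast
  then have "L (0+0) = L 0 + L 0" using L_add by blast
  then show ?thesis by simp
qed
lemma herm': "x \<in> S \<Longrightarrow> L (invol x) = cnj (L x)" using herm by (simp add: hermitian_on_def)

lemma I0[simp]: "I 0 V = V" by (simp add: iter_space_def)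
lemma ISuc: "I (Suc n) V = step_space smul G (I n V)" by (simp add: iter_space_def)

lemma step_mem: "y \<in> step_space smul G V \<Longrightarrow> \<exists>z s. z \<in> V \<and> s \<in> M.span {a * v | a v. a \<in> G \<and> v \<in> V} \<and> y = z + s"
  by (auto simp: step_space_def set_plus_def)

lemma step_sup: "V \<subseteq> step_space smul G V"
  unfolding step_space_def set_plus_def
  by (force intro: M.span_zero)

lemma step_mono: "V \<subseteq> W \<Longrightarrow> step_space smul G V \<subseteq> step_space smul G W"
proof -
  assume "V \<subseteq> W"
  then have "M.span {a * v | a v. a \<in> G \<and> v \<in> V} \<subseteq> M.span {a * v | a v. a \<in> G \<and> v \<in> W}"
    by (intro M.span_mono) blast
  with \<open>V \<subseteq> W\<close> show ?thesis unfolding step_space_def set_plus_def by blast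
qed

lemma I_mono: "V \<subseteq> W \<Longrightarrow> I n V \<subseteq> I n W"
  by (induction n) (auto simp: ISuc dest: step_mono)

lemma I_le: "p \<le> q \<Longrightarrow> I p V \<subseteq> I q V"
proof (induction q)
  case 0 then show ?case by simp
next
  case (Suc q)
  show ?case
  proof (cases "p = Suc q")
    case False
    then have "I p V \<subseteq> I q V" using Suc by simp
    then show ?thesis using step_sup[of "I q V"] by (simp add: ISuc)
  qed simp
qed

lemma I_add: "I p (I q V) = I (p + q) V"
  by (simp add: iter_space_def funpow_add)

lemma zero_IB: "0 \<in> I p B"
  using I_le[of 0 p B] subB M.subspace_def by auto

lemma G_mult: "a \<in> G \<Longrightarrow> c \<in> I p B \<Longrightarrow> a * c \<in> I (Suc p) B"
proof -
  assume a: "a \<in> G" and c: "c \<in> I p B"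
  have "a * c \<in> M.span {a * v | a v. a \<in> G \<and> v \<in> I p B}"
    by (rule M.span_base) (use a c in blast)
  then have "0 + a * c \<in> step_space smul G (I p B)"
    using zero_IB unfolding step_space_def set_plus_def by blast
  then show ?thesis by (simp add: ISuc)
qed

lemma IB_C: "p \<le> m \<Longrightarrow> I p B \<subseteq> C"
  using I_le[of p m B] Bm by blast


lemma invol_add: "invol (x + y) = invol x + invol y" using alg by (simp add: star_algebra_def)
lemma invC': "x \<in> C \<Longrightarrow> invol x \<in> C" using invC by (auto simp: star_invariant_def)

lemma good_sub: "M.subspace {y. good c y}"
proof (rule M.subspaceI)
  show "0 \<in> {y. good c y}" using S_sub M.subspace_def L_zero by (auto simp: good_def)
next
  fix x y assume "x \<in> {y. good c y}" "y \<in> {y. good c y}"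
  then show "x + y \<in> {y. good c y}"
    using S_sub M.subspace_def L_add by (auto simp: good_def distrib_left)
next
  fix r x assume "x \<in> {y. good c y}"
  then show "smul r x \<in> {y. good c y}"
    using S_sub M.subspace_def L_smul by (auto simp: good_def smul_right[symmetric])
qed

lemma good_add: "good c z \<Longrightarrow> good c s \<Longrightarrow> good c (z + s)"
  using good_sub unfolding M.subspace_def by blast

lemma good_step:
  assumes h1: "\<forall>v\<in>V. good c v" and h2: "\<forall>a\<in>G. \<forall>v\<in>V. good (invol a * c) v"
    and y: "y \<in> step_space smul G V"
  shows "good c y"
proof -
  obtain z s where zs: "z \<in> V" "s \<in> M.span {a * v | a v. a \<in> G \<and> v \<in> V}" "y = z + s"
    using step_mem[OF y] by blast
  have "{a * v | a v. a \<in> G \<and> v \<in> V} \<subseteq> {y. good c y}"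
  proof
    fix x assume "x \<in> {a * v | a v. a \<in> G \<and> v \<in> V}"
    then obtain a v where av: "a \<in> G" "v \<in> V" "x = a * v" by blast
    have "good (invol a * c) v" using h2 av by blast
    moreover have "invol (invol a * c) * v = invol c * x"
      by (simp add: invol_mult invol_invol av mult.assoc)
    ultimately show "x \<in> {y. good c y}" by (simp add: good_def)
  qed
  then have "s \<in> {y. good c y}" using M.span_minimal[OF _ good_sub] zs(2) by blast
  then show ?thesis using good_add h1 zs by auto
qed

lemma kern_dec:
  assumes y: "y \<in> C" and hb: "\<forall>b\<in>B. good b y" and c: "c \<in> C"
  shows "good c y"
proof -
  obtain b k where bk: "b \<in> B" "k \<in> kernel_L invol L C" "c = b + k"
  proof -
    have "c \<in> set_plus B (kernel_L invol L C)" using c decomp by blast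
    then show ?thesis using that unfolding set_plus_def by blast
  qed
  have kC: "k \<in> C" using bk kernel_L_def by blast
  have x: "invol k * y \<in> S" using S_prod invC' kC y by blast
  have "L (invol (invol k * y)) = 0" using bk(2) y
    by (simp add: invol_mult invol_invol kernel_L_def)
  then have "L (invol k * y) = 0" using herm'[OF x] by simp
  then have "good k y" using x by (simp add: good_def)
  moreover have "good b y" using hb bk by blast
  moreover have "invol c * y = invol b * y + invol k * y" using bk by (simp add: invol_add distrib_right)
  ultimately show ?thesis using S_sub L_add unfolding good_def M.subspace_def by auto
qed

abbreviation K where "K \<equiv> kernel_L invol L C \<inter> I 1 B"

lemma main: "\<forall>p\<le>m. p + n \<le> 2*m - 1 \<longrightarrow> (\<forall>c\<in>I p B. \<forall>y\<in>I n K. good c y)"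
proof (induction n)
  case 0
  show ?case
  proof (intro allI impI ballI)
    fix p c y assume p: "p \<le> m" and c: "c \<in> I p B" and y: "y \<in> I 0 K"
    have cC: "c \<in> C" using IB_C p c by blast
    have "y \<in> kernel_L invol L C" using y by simp
    then show "good c y" using S_prod invC' cC unfolding kernel_L_def good_def by blast
  qed
next
  case (Suc n)
  have lt: "good c y" if p: "p < m" "p + Suc n \<le> 2*m - 1" and c: "c \<in> I p B" and y: "y \<in> I (Suc n) K" for p c y
  proof (rule good_step)
    show "y \<in> step_space smul G (I n K)" using y by (simp add: ISuc)
    have "p \<le> m" "p + n \<le> 2*m - 1" using p by auto
    then show "\<forall>v\<in>I n K. good c v" using Suc.IH c by blast
    show "\<forall>a\<in>G. \<forall>v\<in>I n K. good (invol a * c) v"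
    proof (intro ballI)
      fix a v assume a: "a \<in> G" and v: "v \<in> I n K"
      have "invol a * c \<in> I (Suc p) B" using G_mult invG a c by blast
      moreover have "Suc p \<le> m" "Suc p + n \<le> 2*m - 1" using p by auto
      ultimately show "good (invol a * c) v" using Suc.IH v by blast
    qed
  qed
  show ?case
  proof (intro allI impI ballI)
    fix p c y assume p1: "p \<le> m" and p2: "p + Suc n \<le> 2*m - 1" and c: "c \<in> I p B" and y: "y \<in> I (Suc n) K"
    show "good c y"
    proof (cases "p < m")
      case True then show ?thesis using lt p2 c y by blast
    next
      case False
      have p: "p \<le> m" "p + Suc n \<le> 2*m - 1" using p1 p2 by auto
      then have pm: "p = m" "Suc n + 1 \<le> m" using False by auto
      have "y \<in> I (Suc n) (I 1 B)" using I_mono[of K "I 1 B" "Suc n"] y by blast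
      then have "y \<in> I (Suc n + 1) B" by (simp add: I_add)
      then have yC: "y \<in> C" using IB_C pm by blast
      have "\<forall>b\<in>B. good b y" using lt[of 0 _ y] m p y by simp
      moreover have "c \<in> C" using IB_C pm c by blast
      ultimately show ?thesis using kern_dec yC by blast
    qed
  qed
qed

lemma final: "I (2 * m - 1) K \<inter> C \<subseteq> kernel_L invol L C"
proof
  fix x assume x: "x \<in> I (2 * m - 1) K \<inter> C"
  have "\<forall>b\<in>B. good b x" using main[of "2*m-1"] x by simp
  then have "\<forall>c\<in>C. good c x" using kern_dec x by blast
  then show "x \<in> kernel_L invol L C" using x by (simp add: kernel_L_def good_def)
qed

end
theorem lemma3p3:
  fixes smul :: "complex \<Rightarrow> 'a::ring_1 \<Rightarrow> 'a" and invol :: "'a \<Rightarrow> 'a"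
    and G B C :: "'a set" and L :: "'a \<Rightarrow> complex" and m :: nat
  assumes alg: "star_algebra smul invol"
    and gen: "generators smul invol G"
    and subB: "module.subspace smul B" and subC: "module.subspace smul C"
    and BC: "B \<subseteq> C"
    and invB: "star_invariant invol B" and invC: "star_invariant invol C"
    and oneB: "1 \<in> B"
    and m: "m \<ge> 1"
    and Bm: "iter_space smul G m B \<subseteq> C"
    and lin: "linear_on smul (sq_space smul C) L"
    and herm: "hermitian_on invol (sq_space smul C) L"
    and decomp: "C = set_plus B (kernel_L invol L C)"
  shows "iter_space smul G (2 * m - 1) (kernel_L invol L C \<inter> iter_space smul G 1 B) \<inter> C
           \<subseteq> kernel_L invol L C"
proof -
  interpret ctx smul invol G B C L m
    by (unfold_locales; fact)
  show ?thesis by (rule final)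
qed

end
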